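(* For all problems $f,g$: if $f\times\mathsf C_2\le_W\overline g$, then $f\le_W g$. Likewise, if $f\times\mathsf C_2\le_{sW}\overline g$, then $f\le_{sW}g$.
   Context: A problem $f:\subseteq X\rightrightarrows Y$ between represented spaces (sets with surjective partial $\delta:\subseteq\mathbb N^\mathbb N\to X$) is a partial multi-valued map with nonempty values on its domain; $F\vdash f$ means $\delta_YF(p)\in f(\delta_X(p))$ whenever $\delta_X(p)\in\mathrm{dom}(f)$. $f\le_W g$ iff there are computable partial $H,K$ with $H\langle\mathrm{id},GK\rangle\vdash f$ for all $G\vdash g$; $f\le_{sW}g$ iff there are computable $H,K$ with $HGK\vdash f$ for all $G\vdash g$. The product $f\times g$ maps $(x,u)\mapsto f(x)\times g(u)$ on $\mathrm{dom}(f)\times\mathrm{dom}(g)$. $\mathsf C_2:\subseteq\mathcal A_-(\{0,1\})\rightrightarrows\{0,1\}$, $A\mapsto A$ on nonempty $A$, where subsets of $\{0,1\}$ are given by negative information (an enumeration of the complement). For $p\in\mathbb{N}^\mathbb{N}$, $p-1$ is the concatenation of $p(0)-1,p(1)-1,\dots$ with $0-1$ the empty word; the completion of $(X,\delta_X)$ is $\overline X=X\cup\{\bot\}$ with $\delta_{\overline X}(p)=\delta_X(p-1)$ if $p-1$ is an infinite sequence in $\mathrm{dom}(\delta_X)$, $\bot$ otherwise; $\overline g:\overline U\rightrightarrows\overline V$ equals $g$ on $\mathrm{dom}(g)$ and $\overline V$ elsewhere. *)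

theory Defs
  imports Main "HOL-Library.Nat_Bijection" "HOL-Library.Infinite_Set"
begin

datatype prim_rec_term = PZ | PS | PProj nat | PComp prim_rec_term "prim_rec_term list" | PRec prim_rec_term prim_rec_term

definition arg :: "nat \<Rightarrow> nat list \<Rightarrow> nat" where
  "arg i xs = (if i < length xs then xs ! i else 0)"

primrec peval :: "prim_rec_term \<Rightarrow> nat list \<Rightarrow> nat" where
  "peval PZ xs = 0"
| "peval PS xs = Suc (arg 0 xs)"
| "peval (PProj i) xs = arg i xs"
| "peval (PComp f gs) xs = peval f (map (\<lambda>g. peval g xs) gs)"
| "peval (PRec f g) xs =
     (case xs of [] \<Rightarrow> peval f []
      | y # ys \<Rightarrow> rec_nat (peval f ys) (\<lambda>n r. peval g (n # r # ys)) y)"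

type_synonym baire = "nat \<Rightarrow> nat"

definition prefix_code :: "baire \<Rightarrow> nat \<Rightarrow> nat" where
  "prefix_code p k = list_encode (map p [0..<k])"

text \<open>A machine is given by a primitive recursive M: on input (n, code of p|k),
  M returns 0 ("no answer yet") or m+1 ("the n-th output symbol is m").\<close>
definition answers :: "prim_rec_term \<Rightarrow> baire \<Rightarrow> nat \<Rightarrow> nat \<Rightarrow> bool" where
  "answers M p n k \<longleftrightarrow> 0 < peval M [n, prefix_code p k]"

definition machine_total_on :: "prim_rec_term \<Rightarrow> baire \<Rightarrow> bool" where
  "machine_total_on M p \<longleftrightarrow> (\<forall>n. \<exists>k. answers M p n k)"

definition machine_out :: "prim_rec_term \<Rightarrow> baire \<Rightarrow> baire" where
  "machine_out M p = (\<lambda>n. peval M [n, prefix_code p (LEAST k. answers M p n k)] - 1)"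

text \<open>Partial functions on Baire space are modelled as option-valued functions.
  F is computable iff some machine computes F(p) for every p in dom F.\<close>
definition computable :: "(baire \<Rightarrow> baire option) \<Rightarrow> bool" where
  "computable F \<longleftrightarrow> (\<exists>M. \<forall>p q. F p = Some q \<longrightarrow> machine_total_on M p \<and> q = machine_out M p)"

definition pairB :: "baire \<Rightarrow> baire \<Rightarrow> baire" where
  "pairB p q = (\<lambda>n. if even n then p (n div 2) else q (n div 2))"

definition representation :: "(baire \<Rightarrow> 'a option) \<Rightarrow> bool" where
  "representation \<delta> \<longleftrightarrow> (\<forall>x. \<exists>p. \<delta> p = Some x)"

text \<open>A problem f : X \<rightrightarrows> Y is a function 'x \<Rightarrow> 'y set; dom f = {x. f x \<noteq> {}}.\<close>

definition realizes :: "(baire \<Rightarrow> baire option) \<Rightarrow> (baire \<Rightarrow> 'x option) \<Rightarrow> (baire \<Rightarrow> 'y option)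
    \<Rightarrow> ('x \<Rightarrow> 'y set) \<Rightarrow> bool" where
  "realizes F \<delta>X \<delta>Y f \<longleftrightarrow>
     (\<forall>p x. \<delta>X p = Some x \<and> f x \<noteq> {} \<longrightarrow> (\<exists>q y. F p = Some q \<and> \<delta>Y q = Some y \<and> y \<in> f x))"

definition obind :: "'a option \<Rightarrow> ('a \<Rightarrow> 'b option) \<Rightarrow> 'b option" where
  "obind a h = (case a of None \<Rightarrow> None | Some x \<Rightarrow> h x)"

definition weihrauch_le ::
  "(baire \<Rightarrow> 'x option) \<Rightarrow> (baire \<Rightarrow> 'y option) \<Rightarrow> ('x \<Rightarrow> 'y set) \<Rightarrow>
   (baire \<Rightarrow> 'u option) \<Rightarrow> (baire \<Rightarrow> 'v option) \<Rightarrow> ('u \<Rightarrow> 'v set) \<Rightarrow> bool" where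
  "weihrauch_le \<delta>X \<delta>Y f \<delta>U \<delta>V g \<longleftrightarrow>
     (\<exists>H K. computable H \<and> computable K \<and>
        (\<forall>G. realizes G \<delta>U \<delta>V g \<longrightarrow>
           realizes (\<lambda>p. obind (K p) (\<lambda>q. obind (G q) (\<lambda>r. H (pairB p r)))) \<delta>X \<delta>Y f))"

definition strong_weihrauch_le ::
  "(baire \<Rightarrow> 'x option) \<Rightarrow> (baire \<Rightarrow> 'y option) \<Rightarrow> ('x \<Rightarrow> 'y set) \<Rightarrow>
   (baire \<Rightarrow> 'u option) \<Rightarrow> (baire \<Rightarrow> 'v option) \<Rightarrow> ('u \<Rightarrow> 'v set) \<Rightarrow> bool" where
  "strong_weihrauch_le \<delta>X \<delta>Y f \<delta>U \<delta>V g \<longleftrightarrow>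
     (\<exists>H K. computable H \<and> computable K \<and>
        (\<forall>G. realizes G \<delta>U \<delta>V g \<longrightarrow>
           realizes (\<lambda>p. obind (K p) (\<lambda>q. obind (G q) H)) \<delta>X \<delta>Y f))"

definition prod_rep :: "(baire \<Rightarrow> 'a option) \<Rightarrow> (baire \<Rightarrow> 'b option) \<Rightarrow> baire \<Rightarrow> ('a \<times> 'b) option" where
  "prod_rep \<delta>1 \<delta>2 r =
     (case (\<delta>1 (\<lambda>n. r (2 * n)), \<delta>2 (\<lambda>n. r (2 * n + 1))) of
        (Some x, Some y) \<Rightarrow> Some (x, y) | _ \<Rightarrow> None)"

definition prob_prod :: "('x \<Rightarrow> 'y set) \<Rightarrow> ('u \<Rightarrow> 'v set) \<Rightarrow> ('x \<times> 'u) \<Rightarrow> ('y \<times> 'v) set" where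
  "prob_prod f g = (\<lambda>(x, u). f x \<times> g u)"

text \<open>{0,1} is modelled by bool (False = 0, True = 1), represented by p \<mapsto> p(0).\<close>
definition rep_two :: "baire \<Rightarrow> bool option" where
  "rep_two p = (if p 0 = 0 then Some False else if p 0 = 1 then Some True else None)"

text \<open>Negative information: p enumerates the complement, value b+1 meaning "b is not in A",
  value 0 meaning nothing.\<close>
definition rep_neg_two :: "baire \<Rightarrow> bool set option" where
  "rep_neg_two p = (if (\<forall>n. p n \<le> 2)
      then Some {b. \<forall>n. p n \<noteq> (if b then 2 else 1)} else None)"

definition C2 :: "bool set \<Rightarrow> bool set" where
  "C2 A = A"

text \<open>p - 1: delete zeros and subtract 1 from the remaining entries.\<close>
definition minus_one_infinite :: "baire \<Rightarrow> bool" where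
  "minus_one_infinite p \<longleftrightarrow> infinite {n. 0 < p n}"

definition minus_one :: "baire \<Rightarrow> baire" where
  "minus_one p = (\<lambda>k. p (enumerate {n. 0 < p n} k) - 1)"

text \<open>Completion of a represented space: the type 'a option, None playing the role of \<bottom>.\<close>
definition compl_rep :: "(baire \<Rightarrow> 'a option) \<Rightarrow> baire \<Rightarrow> 'a option option" where
  "compl_rep \<delta> p =
     (if minus_one_infinite p then
        (case \<delta> (minus_one p) of Some x \<Rightarrow> Some (Some x) | None \<Rightarrow> Some None)
      else Some None)"

definition completion :: "('u \<Rightarrow> 'v set) \<Rightarrow> 'u option \<Rightarrow> 'v option set" where
  "completion g x =
     (case x of Some u \<Rightarrow> (if g u \<noteq> {} then Some ` g u else UNIV) | None \<Rightarrow> UNIV)"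

end

theory Submission
  imports Defs
begin


definition PRF :: "(nat list \<Rightarrow> nat) \<Rightarrow> bool" where
  "PRF f \<longleftrightarrow> (\<exists>t. \<forall>xs. peval t xs = f xs)"

lemma arg_Cons_0 [simp]: "arg 0 (x # xs) = x" by (simp add: arg_def)
lemma arg_Cons_Suc [simp]: "arg (Suc i) (x # xs) = arg i xs" by (simp add: arg_def)
lemma arg_Cons_numeral [simp]: "arg (numeral k) (x # xs) = arg (pred_numeral k) xs"
  by (simp add: numeral_eq_Suc)
lemma arg_tl: "arg i (tl xs) = arg (Suc i) xs"
  by (cases xs) (auto simp: arg_def)

lemma PRF_arg [intro]: "PRF (\<lambda>xs. arg i xs)"
  unfolding PRF_def by (rule exI[of _ "PProj i"]) simp

lemma PRF_zero: "PRF (\<lambda>xs. 0)"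
  unfolding PRF_def by (rule exI[of _ PZ]) simp

lemma PRF_compl:
  assumes "PRF h" "list_all PRF gs"
  shows "PRF (\<lambda>xs. h (map (\<lambda>g. g xs) gs))"
proof -
  obtain th where th: "\<And>xs. peval th xs = h xs" using assms(1) unfolding PRF_def by blast
  have "\<exists>ts. length ts = length gs \<and> (\<forall>xs. map (\<lambda>t. peval t xs) ts = map (\<lambda>g. g xs) gs)"
    using assms(2)
  proof (induction gs)
    case Nil then show ?case by simp
  next
    case (Cons g gs)
    then obtain ts where ts: "length ts = length gs" "\<forall>xs. map (\<lambda>t. peval t xs) ts = map (\<lambda>g. g xs) gs" by auto
    from Cons.prems obtain t where t: "\<forall>xs. peval t xs = g xs" unfolding PRF_def by auto
    show ?case by (rule exI[of _ "t # ts"]) (simp add: ts t)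
  qed
  then obtain ts where ts: "\<forall>xs. map (\<lambda>t. peval t xs) ts = map (\<lambda>g. g xs) gs" by blast
  show ?thesis unfolding PRF_def by (rule exI[of _ "PComp th ts"]) (simp add: th ts)
qed

lemma PRF_Suc [intro]: "PRF a \<Longrightarrow> PRF (\<lambda>xs. Suc (a xs))"
proof -
  assume a: "PRF a"
  have "PRF (\<lambda>xs. Suc (arg 0 xs))" unfolding PRF_def by (rule exI[of _ PS]) simp
  from PRF_compl[OF this, of "[a]"] a show ?thesis by simp
qed

lemma PRF_const [intro]: "PRF (\<lambda>xs. k)"
  by (induction k) (auto intro: PRF_zero)

lemma PRF_rec:
  assumes "PRF f" "PRF g"
  shows "PRF (\<lambda>xs. rec_nat (f (tl xs)) (\<lambda>n r. g (n # r # tl xs)) (arg 0 xs))"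
proof -
  obtain tf tg where tf: "\<And>xs. peval tf xs = f xs" and tg: "\<And>xs. peval tg xs = g xs"
    using assms unfolding PRF_def by blast
  show ?thesis unfolding PRF_def
    apply (rule exI[of _ "PRec tf tg"])
    apply (intro allI)
    subgoal for xs by (cases xs) (simp_all add: tf tg arg_def)
    done
qed

definition PR1 :: "(nat \<Rightarrow> nat) \<Rightarrow> bool" where "PR1 f \<longleftrightarrow> PRF (\<lambda>xs. f (arg 0 xs))"
definition PR2 :: "(nat \<Rightarrow> nat \<Rightarrow> nat) \<Rightarrow> bool" where "PR2 f \<longleftrightarrow> PRF (\<lambda>xs. f (arg 0 xs) (arg 1 xs))"
definition PR3 :: "(nat \<Rightarrow> nat \<Rightarrow> nat \<Rightarrow> nat) \<Rightarrow> bool" where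
  "PR3 f \<longleftrightarrow> PRF (\<lambda>xs. f (arg 0 xs) (arg 1 xs) (arg 2 xs))"
definition PR4 :: "(nat \<Rightarrow> nat \<Rightarrow> nat \<Rightarrow> nat \<Rightarrow> nat) \<Rightarrow> bool" where
  "PR4 f \<longleftrightarrow> PRF (\<lambda>xs. f (arg 0 xs) (arg 1 xs) (arg 2 xs) (arg 3 xs))"
definition PR5 :: "(nat \<Rightarrow> nat \<Rightarrow> nat \<Rightarrow> nat \<Rightarrow> nat \<Rightarrow> nat) \<Rightarrow> bool" where
  "PR5 f \<longleftrightarrow> PRF (\<lambda>xs. f (arg 0 xs) (arg 1 xs) (arg 2 xs) (arg 3 xs) (arg 4 xs))"

lemma PRF_PR1: "PR1 h \<Longrightarrow> PRF a \<Longrightarrow> PRF (\<lambda>xs. h (a xs))"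
  unfolding PR1_def using PRF_compl[of "\<lambda>xs. h (arg 0 xs)" "[a]"] by simp
lemma PRF_PR2: "PR2 h \<Longrightarrow> PRF a \<Longrightarrow> PRF b \<Longrightarrow> PRF (\<lambda>xs. h (a xs) (b xs))"
  unfolding PR2_def using PRF_compl[of "\<lambda>xs. h (arg 0 xs) (arg 1 xs)" "[a,b]"] by simp
lemma PRF_PR3: "PR3 h \<Longrightarrow> PRF a \<Longrightarrow> PRF b \<Longrightarrow> PRF c \<Longrightarrow> PRF (\<lambda>xs. h (a xs) (b xs) (c xs))"
  unfolding PR3_def using PRF_compl[of "\<lambda>xs. h (arg 0 xs) (arg 1 xs) (arg 2 xs)" "[a,b,c]"] by simp
lemma PRF_PR4: "PR4 h \<Longrightarrow> PRF a \<Longrightarrow> PRF b \<Longrightarrow> PRF c \<Longrightarrow> PRF d \<Longrightarrow> PRF (\<lambda>xs. h (a xs) (b xs) (c xs) (d xs))"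
  unfolding PR4_def using PRF_compl[of "\<lambda>xs. h (arg 0 xs) (arg 1 xs) (arg 2 xs) (arg 3 xs)" "[a,b,c,d]"] by simp
lemma PRF_PR5: "PR5 h \<Longrightarrow> PRF a \<Longrightarrow> PRF b \<Longrightarrow> PRF c \<Longrightarrow> PRF d \<Longrightarrow> PRF e \<Longrightarrow> PRF (\<lambda>xs. h (a xs) (b xs) (c xs) (d xs) (e xs))"
  unfolding PR5_def using PRF_compl[of "\<lambda>xs. h (arg 0 xs) (arg 1 xs) (arg 2 xs) (arg 3 xs) (arg 4 xs)" "[a,b,c,d,e]"] by simp

lemma PR_rec3:
  assumes "PR3 B" "PR5 S"
  shows "PR4 (\<lambda>y a b c. rec_nat (B a b c) (\<lambda>n r. S n r a b c) y)"
  using PRF_rec[OF assms[unfolded PR3_def PR5_def]] unfolding PR4_def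
  by (simp add: arg_tl numeral_2_eq_2 numeral_3_eq_3)


lemma PRF_cong: "PRF f \<Longrightarrow> (\<And>xs. f xs = g xs) \<Longrightarrow> PRF g"
proof -
  assume "PRF f" "\<And>xs. f xs = g xs" then have "f = g" by auto
  with \<open>PRF f\<close> show ?thesis by simp
qed

lemma PR3I: "PRF (\<lambda>xs. f (arg 0 xs) (arg 1 xs) (arg 2 xs)) \<Longrightarrow> PR3 f" by (simp add: PR3_def)
lemma PR5I: "PRF (\<lambda>xs. f (arg 0 xs) (arg 1 xs) (arg 2 xs) (arg 3 xs) (arg 4 xs)) \<Longrightarrow> PR5 f" by (simp add: PR5_def)

lemma rec_add: "rec_nat a (\<lambda>n r. Suc r) y = y + a" by (induction y) auto
lemma rec_mult: "rec_nat 0 (\<lambda>n r. r + a) y = y * a" by (induction y) auto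
lemma rec_sub: "rec_nat a (\<lambda>n r. r - 1) y = a - y" by (induction y) auto
lemma rec_ifz: "rec_nat a (\<lambda>n r. b) y = (if y = 0 then a else b)" by (cases y) auto

lemma PRF_add [intro]: assumes "PRF a" "PRF b" shows "PRF (\<lambda>xs. a xs + b xs)"
proof -
  have P: "PR4 (\<lambda>y a b c. rec_nat a (\<lambda>n r. Suc r) y)"
    using PR_rec3[of "\<lambda>a b c. a" "\<lambda>n r a b c. Suc r"] by (auto intro!: PR3I PR5I)
  show ?thesis using PRF_PR4[OF P assms(1,2) PRF_zero PRF_zero] by (simp add: rec_add add.commute)
qed

lemma PRF_sub [intro]: assumes "PRF a" "PRF b" shows "PRF (\<lambda>xs. a xs - b xs)"
proof -
  have S: "PR5 (\<lambda>n r a b c. r - 1)"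
  proof -
    have "PR4 (\<lambda>y a b c. rec_nat 0 (\<lambda>n r. n) y)"
      using PR_rec3[of "\<lambda>a b c. 0" "\<lambda>n r a b c. n"] by (auto intro!: PR3I PR5I)
    then have "PRF (\<lambda>xs. rec_nat 0 (\<lambda>n r. n) (arg 1 xs))"
      using PRF_PR4[of _ "\<lambda>xs. arg 1 xs" "\<lambda>_. 0" "\<lambda>_. 0" "\<lambda>_. 0"] PRF_zero by auto
    moreover have "rec_nat 0 (\<lambda>n r. n) y = y - 1" for y :: nat by (cases y) auto
    ultimately show "PR5 (\<lambda>n r a b c. r - 1)" by (auto intro!: PR5I)
  qed
  have P: "PR4 (\<lambda>y a b c. rec_nat a (\<lambda>n r. r - 1) y)"
    using PR_rec3[of "\<lambda>a b c. a" "\<lambda>n r a b c. r - 1"] S by (auto intro!: PR3I)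
  show ?thesis by (rule PRF_cong[OF PRF_PR4[OF P assms(2,1) PRF_zero PRF_zero]]) (rule rec_sub)
qed

lemma PRF_mult [intro]: assumes "PRF a" "PRF b" shows "PRF (\<lambda>xs. a xs * b xs)"
proof -
  have P: "PR4 (\<lambda>y a b c. rec_nat 0 (\<lambda>n r. r + a) y)"
    using PR_rec3[of "\<lambda>a b c. 0" "\<lambda>n r a b c. r + a"] by (auto intro!: PR3I PR5I)
  show ?thesis using PRF_PR4[OF P assms(1,2) PRF_zero PRF_zero] by (simp add: rec_mult)
qed

lemma PRF_ifz: assumes "PRF c" "PRF a" "PRF b" shows "PRF (\<lambda>xs. if c xs = 0 then a xs else b xs)"
proof -
  have P: "PR4 (\<lambda>y a b c. rec_nat a (\<lambda>n r. b) y)"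
    using PR_rec3[of "\<lambda>a b c. a" "\<lambda>n r a b c. b"] by (auto intro!: PR3I PR5I)
  show ?thesis using PRF_PR4[OF P assms(1,2,3) PRF_zero] by (simp add: rec_ifz)
qed

definition PRP :: "(nat list \<Rightarrow> bool) \<Rightarrow> bool" where
  "PRP P \<longleftrightarrow> PRF (\<lambda>xs. if P xs then 1 else 0)"

lemma PRF_if [intro]: assumes "PRP P" "PRF a" "PRF b" shows "PRF (\<lambda>xs. if P xs then a xs else b xs)"
  by (rule PRF_cong[OF PRF_ifz[OF assms(1)[unfolded PRP_def] assms(3,2)]]) auto

lemma PRP_le [intro]: assumes "PRF a" "PRF b" shows "PRP (\<lambda>xs. a xs \<le> b xs)"
  unfolding PRP_def by (rule PRF_cong[OF PRF_sub[OF PRF_const PRF_sub[OF assms]], of 1]) auto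

lemma PRP_less [intro]: assumes "PRF a" "PRF b" shows "PRP (\<lambda>xs. a xs < b xs)"
  using PRP_le[OF PRF_Suc[OF assms(1)] assms(2)] by (simp add: Suc_le_eq)

lemma PRP_conj [intro]: assumes "PRP P" "PRP Q" shows "PRP (\<lambda>xs. P xs \<and> Q xs)"
  unfolding PRP_def by (rule PRF_cong[OF PRF_mult[OF assms[unfolded PRP_def]]]) auto

lemma PRP_not [intro]: assumes "PRP P" shows "PRP (\<lambda>xs. \<not> P xs)"
  unfolding PRP_def by (rule PRF_cong[OF PRF_sub[OF PRF_const assms[unfolded PRP_def], of 1]]) auto

lemma PRP_disj [intro]: assumes "PRP P" "PRP Q" shows "PRP (\<lambda>xs. P xs \<or> Q xs)"
  using PRP_not[OF PRP_conj[OF PRP_not[OF assms(1)] PRP_not[OF assms(2)]]] by simp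

lemma PRP_eq [intro]: assumes "PRF a" "PRF b" shows "PRP (\<lambda>xs. a xs = b xs)"
  using PRP_conj[OF PRP_le[OF assms] PRP_le[OF assms(2,1)]] by (simp add: order_eq_iff)

primrec bmin :: "(nat \<Rightarrow> bool) \<Rightarrow> nat \<Rightarrow> nat" where
  "bmin P 0 = 0"
| "bmin P (Suc b) = (if bmin P b < b then bmin P b else if P b then b else Suc b)"

lemma bmin_eq: "bmin P b = (if \<exists>i<b. P i then (LEAST i. P i) else b)"
proof (induction b)
  case 0 then show ?case by simp
next
  case (Suc b)
  show ?case
  proof (cases "\<exists>i<b. P i")
    case True
    then have "(LEAST i. P i) < b" by (meson LeastI_ex Least_le le_less_trans not_less)
    moreover have "\<exists>i<Suc b. P i" using True less_SucI by blast
    ultimately show ?thesis using Suc True by auto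
  next
    case False
    then have nb: "bmin P b = b" using Suc False by simp
    show ?thesis
    proof (cases "P b")
      case True
      then have "(LEAST i. P i) = b" using False by (metis Least_equality not_less)
      then show ?thesis using nb True by auto
    next
      case F: False
      then have "\<not> (\<exists>i<Suc b. P i)" using False less_Suc_eq by blast
      then show ?thesis using nb F by auto
    qed
  qed
qed

lemma bmin_le: "bmin P b \<le> b" by (simp add: bmin_eq) (meson Least_le le_less_trans less_imp_le)
lemma bmin_ex: "(bmin P b < b) \<longleftrightarrow> (\<exists>i<b. P i)"
  by (simp add: bmin_eq) (meson LeastI_ex Least_le le_less_trans not_less)
lemma bmin_P: "bmin P b < b \<Longrightarrow> P (bmin P b)"
  by (auto simp add: bmin_eq split: if_splits intro: LeastI)
lemma bmin_least: "i < bmin P b \<Longrightarrow> \<not> P i"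
proof
  assume "i < bmin P b" "P i"
  then show False
    by (auto simp add: bmin_eq split: if_splits dest: not_less_Least)
qed
lemma bmin_is_Least: "bmin P b < b \<Longrightarrow> bmin P b = (LEAST i. P i)"
  by (auto simp add: bmin_eq split: if_splits)

declare bmin.simps(2) [simp del]

definition PRP4 :: "(nat \<Rightarrow> nat \<Rightarrow> nat \<Rightarrow> nat \<Rightarrow> bool) \<Rightarrow> bool" where
  "PRP4 P \<longleftrightarrow> PRP (\<lambda>xs. P (arg 0 xs) (arg 1 xs) (arg 2 xs) (arg 3 xs))"

lemma PRP_PRP4: "PRP4 P \<Longrightarrow> PRF a \<Longrightarrow> PRF b \<Longrightarrow> PRF c \<Longrightarrow> PRF d \<Longrightarrow> PRP (\<lambda>xs. P (a xs) (b xs) (c xs) (d xs))"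
  unfolding PRP4_def PRP_def using PRF_PR4[of "\<lambda>k a b c. if P k a b c then 1 else 0" a b c d]
  by (simp add: PR4_def)

lemma rec_bmin: "bmin P y = rec_nat 0 (\<lambda>n r. if r < n then r else if P n then n else Suc n) y"
  by (induction y) (auto simp: bmin.simps)

lemma PR_bmin: assumes "PRP4 P" shows "PR4 (\<lambda>y a b c. bmin (\<lambda>k. P k a b c) y)"
proof -
  have S: "PR5 (\<lambda>n r a b c. if r < n then r else if P n a b c then n else Suc n)"
    apply (rule PR5I)
    apply (intro PRF_if PRP_less PRP_PRP4[OF assms] PRF_arg PRF_Suc)
    done
  have "PR4 (\<lambda>y a b c. rec_nat 0 (\<lambda>n r. if r < n then r else if P n a b c then n else Suc n) y)"
    using PR_rec3[of "\<lambda>a b c. 0" "\<lambda>n r a b c. if r < n then r else if P n a b c then n else Suc n"] S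
    by (auto intro!: PR3I)
  then show ?thesis by (simp add: rec_bmin[symmetric])
qed

lemma PRF_bmin: "PRP4 P \<Longrightarrow> PRF y \<Longrightarrow> PRF a \<Longrightarrow> PRF b \<Longrightarrow> PRF c \<Longrightarrow>
   PRF (\<lambda>xs. bmin (\<lambda>k. P k (a xs) (b xs) (c xs)) (y xs))"
  using PRF_PR4[OF PR_bmin] by blast

lemma PRP_bex: assumes "PRP4 P" "PRF y" "PRF a" "PRF b" "PRF c"
  shows "PRP (\<lambda>xs. \<exists>k<y xs. P k (a xs) (b xs) (c xs))"
  using PRP_less[OF PRF_bmin[OF assms] assms(2)] by (simp add: bmin_ex)


lemma PRP4I: "PRP (\<lambda>xs. P (arg 0 xs) (arg 1 xs) (arg 2 xs) (arg 3 xs)) \<Longrightarrow> PRP4 P" by (simp add: PRP4_def)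
lemma PR1I: "PRF (\<lambda>xs. f (arg 0 xs)) \<Longrightarrow> PR1 f" by (simp add: PR1_def)
lemma PR2I: "PRF (\<lambda>xs. f (arg 0 xs) (arg 1 xs)) \<Longrightarrow> PR2 f" by (simp add: PR2_def)
lemma PR4I: "PRF (\<lambda>xs. f (arg 0 xs) (arg 1 xs) (arg 2 xs) (arg 3 xs)) \<Longrightarrow> PR4 f" by (simp add: PR4_def)

lemma rec_tri: "rec_nat 0 (\<lambda>n r. r + Suc n) y = triangle y" by (induction y) auto

lemma PRF_tri [intro]: assumes "PRF a" shows "PRF (\<lambda>xs. triangle (a xs))"
proof -
  have P: "PR4 (\<lambda>y a b c. rec_nat 0 (\<lambda>n r. r + Suc n) y)"
    by (rule PR_rec3; rule PR3I PR5I; intro PRF_add PRF_Suc PRF_arg PRF_const)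
  show ?thesis by (rule PRF_cong[OF PRF_PR4[OF P assms PRF_zero PRF_zero PRF_zero]]) (rule rec_tri)
qed

lemma PRF_pe [intro]: assumes "PRF a" "PRF b" shows "PRF (\<lambda>xs. prod_encode (a xs, b xs))"
  by (rule PRF_cong[OF PRF_add[OF PRF_tri[OF PRF_add[OF assms]] assms(1)]]) (simp add: prod_encode_def)

definition pds :: "nat \<Rightarrow> nat" where "pds m = bmin (\<lambda>s. m < triangle (Suc s)) (Suc m)"

lemma triangle_ge: "n \<le> triangle n" by (induction n) auto

lemma prod_decode_pds: "prod_decode m = (m - triangle (pds m), pds m - (m - triangle (pds m)))"
proof -
  let ?s = "pds m"
  have ex: "\<exists>i<Suc m. m < triangle (Suc i)" using triangle_ge[of "Suc m"] by auto
  then have lt: "?s < Suc m" unfolding pds_def using bmin_ex[of "\<lambda>s. m < triangle (Suc s)" "Suc m"] by blast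
  have h1: "m < triangle (Suc ?s)" using bmin_P[OF lt[unfolded pds_def]] unfolding pds_def .
  have h2: "triangle ?s \<le> m"
  proof (cases ?s)
    case 0 then show ?thesis by simp
  next
    case (Suc t)
    then have "t < ?s" by simp
    from bmin_least[OF this[unfolded pds_def]] Suc show ?thesis by (simp add: pds_def not_less)
  qed
  let ?x = "m - triangle ?s"
  have "?x \<le> ?s" using h1 h2 by simp
  then have "prod_encode (?x, ?s - ?x) = m" using h2 by (simp add: prod_encode_def)
  then show ?thesis by (metis prod_encode_inverse)
qed

lemma PRF_pds [intro]: assumes "PRF a" shows "PRF (\<lambda>xs. pds (a xs))"
proof -
  have "PRP4 (\<lambda>s m b c. m < triangle (Suc s))" by (rule PRP4I) (intro PRP_less PRF_arg PRF_tri PRF_Suc)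
  from PRF_bmin[OF this PRF_Suc[OF assms] assms PRF_zero PRF_zero] show ?thesis
    unfolding pds_def .
qed

lemma PRF_fst_pd [intro]: assumes "PRF a" shows "PRF (\<lambda>xs. fst (prod_decode (a xs)))"
proof (rule PRF_cong[of "\<lambda>xs. a xs - triangle (pds (a xs))"])
  show "PRF (\<lambda>xs. a xs - triangle (pds (a xs)))" using assms by (intro PRF_sub PRF_tri PRF_pds)
qed (subst prod_decode_pds, simp)

lemma PRF_snd_pd [intro]: assumes "PRF a" shows "PRF (\<lambda>xs. snd (prod_decode (a xs)))"
proof (rule PRF_cong[of "\<lambda>xs. pds (a xs) - (a xs - triangle (pds (a xs)))"])
  show "PRF (\<lambda>xs. pds (a xs) - (a xs - triangle (pds (a xs))))" using assms by (intro PRF_sub PRF_tri PRF_pds)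
qed (subst prod_decode_pds, simp)

definition hdc :: "nat \<Rightarrow> nat" where "hdc c = fst (prod_decode (c - 1))"
definition tlc :: "nat \<Rightarrow> nat" where "tlc c = (if c = 0 then 0 else snd (prod_decode (c - 1)))"

lemma hdc_enc [simp]: "hdc (Suc (prod_encode (x, y))) = x" by (simp add: hdc_def)
lemma tlc_enc [simp]: "tlc (Suc (prod_encode (x, y))) = y" by (simp add: tlc_def)
lemma tlc_0 [simp]: "tlc 0 = 0" by (simp add: tlc_def)

lemma PRF_hdc [intro]: "PRF a \<Longrightarrow> PRF (\<lambda>xs. hdc (a xs))"
  unfolding hdc_def by (intro PRF_fst_pd PRF_sub PRF_const)
lemma PRF_tlc [intro]: "PRF a \<Longrightarrow> PRF (\<lambda>xs. tlc (a xs))"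
  unfolding tlc_def by (intro PRF_if PRP_eq PRF_snd_pd PRF_sub PRF_const)

definition itl :: "nat \<Rightarrow> nat \<Rightarrow> nat" where "itl i c = rec_nat c (\<lambda>n r. tlc r) i"

lemma itl_enc: "itl i (list_encode xs) = list_encode (drop i xs)"
proof (induction i)
  case 0 then show ?case by (simp add: itl_def)
next
  case (Suc i)
  have "itl (Suc i) (list_encode xs) = tlc (itl i (list_encode xs))" by (simp add: itl_def)
  also have "\<dots> = list_encode (drop (Suc i) xs)" using Suc
    by (cases "drop i xs") (auto simp: drop_Suc tl_drop[symmetric] drop_tl)
  finally show ?case .
qed

lemma PRF_itl [intro]: assumes "PRF a" "PRF b" shows "PRF (\<lambda>xs. itl (a xs) (b xs))"
proof -
  have P: "PR4 (\<lambda>y a b c. rec_nat a (\<lambda>n r. tlc r) y)"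
    by (rule PR_rec3; rule PR3I PR5I; intro PRF_tlc PRF_arg)
  show ?thesis unfolding itl_def by (rule PRF_PR4[OF P assms PRF_zero PRF_zero])
qed

definition nthc :: "nat \<Rightarrow> nat \<Rightarrow> nat" where "nthc c i = hdc (itl i c)"
definition lenc :: "nat \<Rightarrow> nat" where "lenc c = bmin (\<lambda>i. itl i c = 0) (Suc c)"

lemma PRF_nthc [intro]: "PRF a \<Longrightarrow> PRF b \<Longrightarrow> PRF (\<lambda>xs. nthc (a xs) (b xs))"
  unfolding nthc_def by (intro PRF_hdc PRF_itl)

lemma PRF_lenc [intro]: assumes "PRF a" shows "PRF (\<lambda>xs. lenc (a xs))"
proof -
  have "PRP4 (\<lambda>i c b d. itl i c = 0)" by (rule PRP4I) (intro PRP_eq PRF_itl PRF_arg PRF_const)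
  from PRF_bmin[OF this PRF_Suc[OF assms] assms PRF_zero PRF_zero] show ?thesis
    unfolding lenc_def .
qed

lemma nthc_enc: "i < length xs \<Longrightarrow> nthc (list_encode xs) i = xs ! i"
  by (simp add: nthc_def itl_enc Cons_nth_drop_Suc[symmetric])

lemma length_le_enc: "length xs \<le> list_encode xs"
proof (induction xs)
  case Nil then show ?case by simp
next
  case (Cons x xs)
  then show ?case using le_prod_encode_2[of "list_encode xs" x] by simp
qed

lemma list_encode_0: "list_encode xs = 0 \<longleftrightarrow> xs = []"
  by (cases xs) auto

lemma lenc_enc: "lenc (list_encode xs) = length xs"
proof -
  have "(\<exists>i<Suc (list_encode xs). itl i (list_encode xs) = 0)"
    using length_le_enc[of xs] by (auto simp: itl_enc list_encode_0 intro!: exI[of _ "length xs"])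
  moreover have "(LEAST i. itl i (list_encode xs) = 0) = length xs"
    by (rule Least_equality) (auto simp: itl_enc list_encode_0)
  ultimately show ?thesis unfolding lenc_def bmin_eq by simp
qed

lemma list_encode_Nil: "list_encode [] = 0" by simp

definition enc_aux :: "(nat \<Rightarrow> nat) \<Rightarrow> nat \<Rightarrow> nat \<Rightarrow> nat" where
  "enc_aux h k d = rec_nat 0 (\<lambda>n r. Suc (prod_encode (h (k - Suc n), r))) d"

lemma enc_aux_eq: "d \<le> k \<Longrightarrow> enc_aux h k d = list_encode (map h [k - d..<k])"
proof (induction d)
  case 0 then show ?case by (simp add: enc_aux_def)
next
  case (Suc d)
  then have "[k - Suc d..<k] = (k - Suc d) # [k - d..<k]"
    by (metis Suc_diff_Suc Suc_le_lessD diff_less le_add_diff_inverse2 upt_conv_Cons zero_less_Suc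
        Suc_diff_le diff_Suc_Suc less_le_trans)
  then show ?case using Suc by (simp add: enc_aux_def)
qed

lemma enc_eq: "list_encode (map h [0..<k]) = enc_aux h k k"
  by (simp add: enc_aux_eq)

lemma PRF_enc [intro]: assumes "PR3 h" "PRF k" "PRF a" "PRF b"
  shows "PRF (\<lambda>xs. list_encode (map (\<lambda>i. h i (a xs) (b xs)) [0..<k xs]))"
proof -
  have S: "PR5 (\<lambda>n r k a b. Suc (prod_encode (h (k - Suc n) a b, r)))"
    by (rule PR5I) (intro PRF_Suc PRF_pe PRF_PR3[OF assms(1)] PRF_sub PRF_arg PRF_const)
  have P: "PR4 (\<lambda>y k a b. rec_nat 0 (\<lambda>n r. Suc (prod_encode (h (k - Suc n) a b, r))) y)"
    by (rule PR_rec3[OF _ S]; rule PR3I; intro PRF_const)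
  show ?thesis
    by (rule PRF_cong[OF PRF_PR4[OF P assms(2,2,3,4)]]) (simp add: enc_eq enc_aux_def)
qed

definition takec :: "nat \<Rightarrow> nat \<Rightarrow> nat" where
  "takec c j = list_encode (map (\<lambda>i. nthc c i) [0..<j])"

lemma PRF_takec [intro]: assumes "PRF a" "PRF b" shows "PRF (\<lambda>xs. takec (a xs) (b xs))"
proof -
  have "PR3 (\<lambda>i c d. nthc c i)" by (rule PR3I) (intro PRF_nthc PRF_arg)
  from PRF_enc[OF this assms(2,1) PRF_zero] show ?thesis unfolding takec_def .
qed

lemma lenc_pc [simp]: "lenc (prefix_code p k) = k"
  by (simp add: prefix_code_def lenc_enc)
lemma nthc_pc [simp]: "i < k \<Longrightarrow> nthc (prefix_code p k) i = p i"
  by (simp add: prefix_code_def nthc_enc)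
lemma takec_pc [simp]: assumes "j \<le> k" shows "takec (prefix_code p k) j = prefix_code p j"
proof -
  have "map (\<lambda>i. nthc (prefix_code p k) i) [0..<j] = map p [0..<j]"
    using assms by (simp add: map_eq_conv)
  then show ?thesis unfolding takec_def prefix_code_def[of p j] by (rule arg_cong[where f=list_encode])
qed


section \<open>Machines\<close>

definition ansf :: "(nat \<Rightarrow> nat \<Rightarrow> nat) \<Rightarrow> baire \<Rightarrow> nat \<Rightarrow> nat \<Rightarrow> bool" where
  "ansf \<phi> p n k \<longleftrightarrow> 0 < \<phi> n (prefix_code p k)"

definition outf :: "(nat \<Rightarrow> nat \<Rightarrow> nat) \<Rightarrow> baire \<Rightarrow> baire" where
  "outf \<phi> p = (\<lambda>n. \<phi> n (prefix_code p (LEAST k. ansf \<phi> p n k)) - 1)"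

definition computes :: "(nat \<Rightarrow> nat \<Rightarrow> nat) \<Rightarrow> (baire \<Rightarrow> baire option) \<Rightarrow> bool" where
  "computes \<phi> F \<longleftrightarrow> (\<forall>p q. F p = Some q \<longrightarrow> (\<forall>n. \<exists>k. ansf \<phi> p n k) \<and> q = outf \<phi> p)"

lemma computableI: assumes "PR2 \<phi>" "computes \<phi> F" shows "computable F"
proof -
  obtain t where t: "\<And>xs. peval t xs = \<phi> (arg 0 xs) (arg 1 xs)" using assms(1) unfolding PR2_def PRF_def by blast
  have a: "answers t p n k \<longleftrightarrow> ansf \<phi> p n k" for p n k by (simp add: answers_def ansf_def t)
  show ?thesis unfolding computable_def
    by (rule exI[of _ t]) (use assms(2) in \<open>auto simp: computes_def machine_total_on_def machine_out_def a t outf_def\<close>)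
qed

lemma computableE: assumes "computable F" obtains \<phi> where "PR2 \<phi>" "computes \<phi> F"
proof -
  obtain M where M: "\<forall>p q. F p = Some q \<longrightarrow> machine_total_on M p \<and> q = machine_out M p"
    using assms unfolding computable_def by blast
  let ?\<phi> = "\<lambda>n c. peval M [n, c]"
  have "PRF (peval M)" unfolding PRF_def by blast
  from PRF_compl[OF this, of "[\<lambda>xs. arg 0 xs, \<lambda>xs. arg 1 xs]"] have "PR2 ?\<phi>" unfolding PR2_def by (simp add: PRF_arg)
  moreover have a: "answers M p n k \<longleftrightarrow> ansf ?\<phi> p n k" for p n k by (simp add: answers_def ansf_def)
  have "computes ?\<phi> F" using M
    by (auto simp: computes_def machine_total_on_def machine_out_def a outf_def)
  ultimately show ?thesis using that by blast
qed

lemma outf_consistent: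
  assumes "\<exists>k. ansf \<phi> p n k" "\<And>k. ansf \<phi> p n k \<Longrightarrow> \<phi> n (prefix_code p k) = Suc v"
  shows "outf \<phi> p n = v"
  using assms(2)[OF LeastI_ex[OF assms(1)]] by (simp add: outf_def)

lemma comp_pointwise:
  assumes "PR1 \<iota>" "PR1 h"
  shows "computable (\<lambda>p. Some (\<lambda>n. h (p (\<iota> n))))"
proof (rule computableI)
  let ?\<phi> = "\<lambda>n c. if \<iota> n < lenc c then Suc (h (nthc c (\<iota> n))) else 0"
  show "PR2 ?\<phi>" by (rule PR2I) (intro PRF_if PRP_less PRF_PR1[OF assms(1)] PRF_PR1[OF assms(2)] PRF_Suc PRF_lenc PRF_nthc PRF_arg PRF_const)
  have a: "ansf ?\<phi> p n k \<longleftrightarrow> \<iota> n < k" for p n k by (simp add: ansf_def)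
  show "computes ?\<phi> (\<lambda>p. Some (\<lambda>n. h (p (\<iota> n))))"
    unfolding computes_def
  proof (intro allI impI conjI)
    fix p q n assume "Some (\<lambda>n. h (p (\<iota> n))) = Some q"
    then have q: "q = (\<lambda>n. h (p (\<iota> n)))" by simp
    show "\<exists>k. ansf ?\<phi> p n k" using a by blast
    show "q = outf ?\<phi> p"
      unfolding q by (rule ext, rule sym, rule outf_consistent) (auto simp: a)
  qed
qed

definition half :: "nat \<Rightarrow> nat" where "half n = n div 2"

lemma rec_half: "rec_nat 0 (\<lambda>n r. if Suc n = 2 * Suc r then Suc r else r) y = y div 2"
  by (induction y) auto

lemma PRF_half [intro]: assumes "PRF a" shows "PRF (\<lambda>xs. a xs div 2)"
proof -
  have P: "PR4 (\<lambda>y a b c. rec_nat 0 (\<lambda>n r. if Suc n = 2 * Suc r then Suc r else r) y)"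
    by (rule PR_rec3; rule PR3I PR5I; intro PRF_if PRP_eq PRF_mult PRF_Suc PRF_arg PRF_const)
  show ?thesis by (rule PRF_cong[OF PRF_PR4[OF P assms PRF_zero PRF_zero PRF_zero]]) (rule rec_half)
qed

lemma PRP_even [intro]: assumes "PRF a" shows "PRP (\<lambda>xs. even (a xs))"
proof -
  have "PRP (\<lambda>xs. a xs = 2 * (a xs div 2))" using assms by (intro PRP_eq PRF_mult PRF_half PRF_const)
  moreover have "(n::nat) = 2 * (n div 2) \<longleftrightarrow> even n" for n by presburger
  ultimately show ?thesis by simp
qed

definition opair :: "baire option \<Rightarrow> baire option \<Rightarrow> baire option" where
  "opair a b = obind a (\<lambda>x. obind b (\<lambda>y. Some (pairB x y)))"

lemma opair_Some: "opair a b = Some q \<longleftrightarrow> (\<exists>x y. a = Some x \<and> b = Some y \<and> q = pairB x y)"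
  by (auto simp: opair_def obind_def split: option.splits)

lemma comp_pair:
  assumes "computable F1" "computable F2"
  shows "computable (\<lambda>p. opair (F1 p) (F2 p))"
proof -
  obtain \<phi>1 where p1: "PR2 \<phi>1" "computes \<phi>1 F1" using assms(1) by (rule computableE)
  obtain \<phi>2 where p2: "PR2 \<phi>2" "computes \<phi>2 F2" using assms(2) by (rule computableE)
  let ?\<phi> = "\<lambda>n c. if even n then \<phi>1 (n div 2) c else \<phi>2 (n div 2) c"
  show ?thesis
  proof (rule computableI)
    show "PR2 ?\<phi>" by (rule PR2I) (intro PRF_if PRP_even PRF_PR2[OF p1(1)] PRF_PR2[OF p2(1)] PRF_half PRF_arg)
    show "computes ?\<phi> (\<lambda>p. opair (F1 p) (F2 p))"
      unfolding computes_def
    proof (intro allI impI)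
      fix p q assume "opair (F1 p) (F2 p) = Some q"
      then obtain x y where xy: "F1 p = Some x" "F2 p = Some y" "q = pairB x y" by (auto simp: opair_Some)
      from p1(2) xy(1) have t1: "\<forall>n. \<exists>k. ansf \<phi>1 p n k" and x: "x = outf \<phi>1 p" by (auto simp: computes_def)
      from p2(2) xy(2) have t2: "\<forall>n. \<exists>k. ansf \<phi>2 p n k" and y: "y = outf \<phi>2 p" by (auto simp: computes_def)
      have a: "ansf ?\<phi> p n k \<longleftrightarrow> (if even n then ansf \<phi>1 p (n div 2) k else ansf \<phi>2 p (n div 2) k)" for n k
        by (simp add: ansf_def)
      show "(\<forall>n. \<exists>k. ansf ?\<phi> p n k) \<and> q = outf ?\<phi> p"
      proof
        show "\<forall>n. \<exists>k. ansf ?\<phi> p n k"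
        proof
          fix n show "\<exists>k. ansf ?\<phi> p n k" using t1 t2 by (cases "even n") (simp_all only: a if_True if_False)
        qed
        show "q = outf ?\<phi> p"
          by (rule ext) (simp add: xy(3) x y pairB_def outf_def a ansf_def)
      qed
    qed
  qed
qed


lemma bmin_cong0: "(\<forall>i<b. P i \<longleftrightarrow> Q i) \<longrightarrow> bmin P b = bmin Q b"
  by (induction b) (auto simp: bmin.simps)
lemma bmin_cong: "(\<And>i. i < b \<Longrightarrow> P i \<longleftrightarrow> Q i) \<Longrightarrow> bmin P b = bmin Q b"
  using bmin_cong0[of b P Q] by blast

lemma fin_bound: fixes N :: nat and P :: "nat \<Rightarrow> nat \<Rightarrow> bool"
  shows "(\<And>i. i < N \<Longrightarrow> \<exists>k. P i k) \<Longrightarrow> \<exists>B. \<forall>i<N. \<exists>k\<le>B. P i k"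
proof (induction N)
  case 0 then show ?case by simp
next
  case (Suc N)
  then obtain B where B: "\<forall>i<N. \<exists>k\<le>B. P i k" by auto
  obtain k0 where k0: "P N k0" using Suc.prems by auto
  show ?case
    by (rule exI[of _ "max B k0"]) (use B k0 less_Suc_eq in \<open>fastforce\<close>)
qed

definition cD :: "(nat \<Rightarrow> nat \<Rightarrow> nat) \<Rightarrow> nat \<Rightarrow> nat \<Rightarrow> nat" where
  "cD \<phi>1 i c = bmin (\<lambda>k. 0 < \<phi>1 i (takec c k)) (Suc (lenc c))"
definition cO :: "(nat \<Rightarrow> nat \<Rightarrow> nat) \<Rightarrow> nat \<Rightarrow> nat \<Rightarrow> nat" where
  "cO \<phi>1 i c = \<phi>1 i (takec c (cD \<phi>1 i c)) - 1"
definition cJ :: "(nat \<Rightarrow> nat \<Rightarrow> nat) \<Rightarrow> nat \<Rightarrow> nat" where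
  "cJ \<phi>1 c = bmin (\<lambda>i. \<not> cD \<phi>1 i c < Suc (lenc c)) (lenc c)"
definition cW :: "(nat \<Rightarrow> nat \<Rightarrow> nat) \<Rightarrow> nat \<Rightarrow> nat \<Rightarrow> nat" where
  "cW \<phi>1 k2 c = list_encode (map (\<lambda>i. cO \<phi>1 i c) [0..<k2])"
definition cE :: "(nat \<Rightarrow> nat \<Rightarrow> nat) \<Rightarrow> (nat \<Rightarrow> nat \<Rightarrow> nat) \<Rightarrow> nat \<Rightarrow> nat \<Rightarrow> nat" where
  "cE \<phi>1 \<phi>2 n c = bmin (\<lambda>k2. 0 < \<phi>2 n (cW \<phi>1 k2 c)) (Suc (cJ \<phi>1 c))"
definition cPsi :: "(nat \<Rightarrow> nat \<Rightarrow> nat) \<Rightarrow> (nat \<Rightarrow> nat \<Rightarrow> nat) \<Rightarrow> nat \<Rightarrow> nat \<Rightarrow> nat" where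
  "cPsi \<phi>1 \<phi>2 n c = (if cE \<phi>1 \<phi>2 n c < Suc (cJ \<phi>1 c) then \<phi>2 n (cW \<phi>1 (cE \<phi>1 \<phi>2 n c) c) else 0)"

lemma PRF_cD [intro]: assumes "PR2 \<phi>1" "PRF a" "PRF b" shows "PRF (\<lambda>xs. cD \<phi>1 (a xs) (b xs))"
proof -
  have "PRP4 (\<lambda>k i c d. 0 < \<phi>1 i (takec c k))"
    by (rule PRP4I) (intro PRP_less PRF_PR2[OF assms(1)] PRF_takec PRF_arg PRF_const)
  from PRF_bmin[OF this PRF_Suc[OF PRF_lenc[OF assms(3)]] assms(2,3) PRF_zero] show ?thesis
    unfolding cD_def .
qed

lemma PRF_cO [intro]: assumes "PR2 \<phi>1" "PRF a" "PRF b" shows "PRF (\<lambda>xs. cO \<phi>1 (a xs) (b xs))"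
  unfolding cO_def using assms by (intro PRF_sub PRF_PR2[OF assms(1)] PRF_takec PRF_cD PRF_const)

lemma PRF_cJ [intro]: assumes "PR2 \<phi>1" "PRF b" shows "PRF (\<lambda>xs. cJ \<phi>1 (b xs))"
proof -
  have "PRP4 (\<lambda>i c d e. \<not> cD \<phi>1 i c < Suc (lenc c))"
    by (rule PRP4I) (intro PRP_not PRP_less PRF_cD[OF assms(1)] PRF_Suc PRF_lenc PRF_arg)
  from PRF_bmin[OF this PRF_lenc[OF assms(2)] assms(2) PRF_zero PRF_zero] show ?thesis
    unfolding cJ_def .
qed

lemma PRF_cW [intro]: assumes "PR2 \<phi>1" "PRF a" "PRF b" shows "PRF (\<lambda>xs. cW \<phi>1 (a xs) (b xs))"
proof -
  have "PR3 (\<lambda>i c d. cO \<phi>1 i c)" by (rule PR3I) (intro PRF_cO[OF assms(1)] PRF_arg)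
  from PRF_enc[OF this assms(2,3) PRF_zero] show ?thesis unfolding cW_def .
qed

lemma PRF_cE [intro]: assumes "PR2 \<phi>1" "PR2 \<phi>2" "PRF a" "PRF b" shows "PRF (\<lambda>xs. cE \<phi>1 \<phi>2 (a xs) (b xs))"
proof -
  have "PRP4 (\<lambda>k2 n c d. 0 < \<phi>2 n (cW \<phi>1 k2 c))"
    by (rule PRP4I) (intro PRP_less PRF_PR2[OF assms(2)] PRF_cW[OF assms(1)] PRF_arg PRF_const)
  from PRF_bmin[OF this PRF_Suc[OF PRF_cJ[OF assms(1,4)]] assms(3,4) PRF_zero] show ?thesis
    unfolding cE_def .
qed

lemma PR2_cPsi: assumes "PR2 \<phi>1" "PR2 \<phi>2" shows "PR2 (cPsi \<phi>1 \<phi>2)"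
  unfolding cPsi_def
  by (rule PR2I) (intro PRF_if PRP_less PRF_cE[OF assms] PRF_Suc PRF_cJ[OF assms(1)] PRF_PR2[OF assms(2)]
      PRF_cW[OF assms(1)] PRF_arg PRF_const)

lemma comp_comp:
  assumes "computable F1" "computable F2"
  shows "computable (\<lambda>p. obind (F1 p) F2)"
proof -
  obtain \<phi>1 where p1: "PR2 \<phi>1" "computes \<phi>1 F1" using assms(1) by (rule computableE)
  obtain \<phi>2 where p2: "PR2 \<phi>2" "computes \<phi>2 F2" using assms(2) by (rule computableE)
  show ?thesis
  proof (rule computableI[OF PR2_cPsi[OF p1(1) p2(1)]])
    show "computes (cPsi \<phi>1 \<phi>2) (\<lambda>p. obind (F1 p) F2)"
      unfolding computes_def
    proof (intro allI impI)
      fix p q assume "obind (F1 p) F2 = Some q"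
      then obtain q1 where q1: "F1 p = Some q1" "F2 q1 = Some q" by (auto simp: obind_def split: option.splits)
      from p1(2) q1(1) have t1: "\<And>n. \<exists>k. ansf \<phi>1 p n k" and q1e: "q1 = outf \<phi>1 p" by (auto simp: computes_def)
      from p2(2) q1(2) have t2: "\<And>n. \<exists>k. ansf \<phi>2 q1 n k" and qe: "q = outf \<phi>2 q1" by (auto simp: computes_def)
      define dn where "dn k i \<longleftrightarrow> (\<exists>k'<Suc k. ansf \<phi>1 p i k')" for k i
      have D: "cD \<phi>1 i (prefix_code p k) = bmin (ansf \<phi>1 p i) (Suc k)" for i k
        unfolding cD_def lenc_pc by (rule bmin_cong) (simp add: ansf_def)
      have Dlt: "cD \<phi>1 i (prefix_code p k) < Suc k \<longleftrightarrow> dn k i" for i k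
        unfolding D dn_def by (rule bmin_ex)
      have O: "cO \<phi>1 i (prefix_code p k) = q1 i" if "dn k i" for i k
      proof -
        have lt: "bmin (ansf \<phi>1 p i) (Suc k) < Suc k" using Dlt[of i k] that D by simp
        then have "cD \<phi>1 i (prefix_code p k) = (LEAST k'. ansf \<phi>1 p i k')" using D bmin_is_Least by simp
        moreover have "cD \<phi>1 i (prefix_code p k) \<le> k" using lt D by simp
        ultimately show ?thesis unfolding cO_def q1e outf_def by simp
      qed
      have J: "cJ \<phi>1 (prefix_code p k) = bmin (\<lambda>i. \<not> dn k i) k" for k
        unfolding cJ_def lenc_pc by (rule bmin_cong) (simp add: Dlt)
      have W: "cW \<phi>1 k2 (prefix_code p k) = prefix_code q1 k2" if "k2 \<le> cJ \<phi>1 (prefix_code p k)" for k2 k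
      proof -
        have "i < k2 \<Longrightarrow> dn k i" for i using bmin_least[of i "\<lambda>i. \<not> dn k i" k] that J[of k] by auto
        then have "map (\<lambda>i. cO \<phi>1 i (prefix_code p k)) [0..<k2] = map q1 [0..<k2]"
          by (simp add: map_eq_conv O)
        then show ?thesis unfolding cW_def prefix_code_def[of q1] by (rule arg_cong[where f=list_encode])
      qed
      have E: "cE \<phi>1 \<phi>2 n (prefix_code p k) = bmin (ansf \<phi>2 q1 n) (Suc (cJ \<phi>1 (prefix_code p k)))" for n k
        unfolding cE_def by (rule bmin_cong) (simp add: W ansf_def)
      have A: "ansf (cPsi \<phi>1 \<phi>2) p n k \<longleftrightarrow> (\<exists>k2<Suc (cJ \<phi>1 (prefix_code p k)). ansf \<phi>2 q1 n k2)" for n k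
      proof -
        have "ansf (cPsi \<phi>1 \<phi>2) p n k \<longleftrightarrow> cE \<phi>1 \<phi>2 n (prefix_code p k) < Suc (cJ \<phi>1 (prefix_code p k))"
        proof
          assume "ansf (cPsi \<phi>1 \<phi>2) p n k" then show "cE \<phi>1 \<phi>2 n (prefix_code p k) < Suc (cJ \<phi>1 (prefix_code p k))"
            by (simp add: ansf_def cPsi_def split: if_splits)
        next
          assume lt: "cE \<phi>1 \<phi>2 n (prefix_code p k) < Suc (cJ \<phi>1 (prefix_code p k))"
          then have "ansf \<phi>2 q1 n (cE \<phi>1 \<phi>2 n (prefix_code p k))" unfolding E by (rule bmin_P)
          moreover have "cE \<phi>1 \<phi>2 n (prefix_code p k) \<le> cJ \<phi>1 (prefix_code p k)" using lt by simp
          ultimately show "ansf (cPsi \<phi>1 \<phi>2) p n k" using lt by (simp add: ansf_def cPsi_def W)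
        qed
        then show ?thesis by (simp add: E bmin_ex)
      qed
      show "(\<forall>n. \<exists>k. ansf (cPsi \<phi>1 \<phi>2) p n k) \<and> q = outf (cPsi \<phi>1 \<phi>2) p"
      proof (intro conjI allI)
        fix n
        define K2 where "K2 = (LEAST k2. ansf \<phi>2 q1 n k2)"
        have aK2: "ansf \<phi>2 q1 n K2" unfolding K2_def using t2 by (rule LeastI_ex)
        obtain B where B: "\<forall>i<K2. \<exists>k\<le>B. ansf \<phi>1 p i k" using fin_bound[of K2 "ansf \<phi>1 p"] t1 by blast
        let ?k = "max B K2"
        have "K2 \<le> cJ \<phi>1 (prefix_code p ?k)"
        proof (rule ccontr)
          assume "\<not> K2 \<le> cJ \<phi>1 (prefix_code p ?k)"
          then have lt: "bmin (\<lambda>i. \<not> dn ?k i) ?k < K2" using J by simp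
          then have "bmin (\<lambda>i. \<not> dn ?k i) ?k < ?k" by simp
          from bmin_P[OF this] have "\<not> dn ?k (bmin (\<lambda>i. \<not> dn ?k i) ?k)" .
          moreover from B lt obtain k' where "k' \<le> B" "ansf \<phi>1 p (bmin (\<lambda>i. \<not> dn ?k i) ?k) k'" by blast
          ultimately show False unfolding dn_def by (meson le_imp_less_Suc max.coboundedI1)
        qed
        then show "\<exists>k. ansf (cPsi \<phi>1 \<phi>2) p n k" using A aK2 le_imp_less_Suc by blast
      next
        show "q = outf (cPsi \<phi>1 \<phi>2) p"
        proof (rule ext)
          fix n
          show "q n = outf (cPsi \<phi>1 \<phi>2) p n"
          proof (rule sym, rule outf_consistent)
            fix k assume a: "ansf (cPsi \<phi>1 \<phi>2) p n k"
            let ?J = "cJ \<phi>1 (prefix_code p k)"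
            let ?E = "cE \<phi>1 \<phi>2 n (prefix_code p k)"
            have lt: "?E < Suc ?J" using A[of n k] a E bmin_ex by metis
            have El: "?E = (LEAST k2. ansf \<phi>2 q1 n k2)" using lt E bmin_is_Least by simp
            have "ansf \<phi>2 q1 n ?E" using lt unfolding E by (rule bmin_P)
            then have pos: "0 < \<phi>2 n (prefix_code q1 ?E)" by (simp add: ansf_def)
            have "cPsi \<phi>1 \<phi>2 n (prefix_code p k) = \<phi>2 n (prefix_code q1 ?E)"
              using lt by (simp add: cPsi_def W)
            also have "\<dots> = Suc (q n)" using pos El by (simp add: qe outf_def)
            finally show "cPsi \<phi>1 \<phi>2 n (prefix_code p k) = Suc (q n)" .
          next
            obtain k2 where "ansf \<phi>2 q1 n k2" using t2 by blast
            show "\<exists>k. ansf (cPsi \<phi>1 \<phi>2) p n k"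
            proof -
              define K2 where "K2 = (LEAST k2. ansf \<phi>2 q1 n k2)"
              have aK2: "ansf \<phi>2 q1 n K2" unfolding K2_def using t2 by (rule LeastI_ex)
              obtain B where B: "\<forall>i<K2. \<exists>k\<le>B. ansf \<phi>1 p i k" using fin_bound[of K2 "ansf \<phi>1 p"] t1 by blast
              let ?k = "max B K2"
              have "K2 \<le> cJ \<phi>1 (prefix_code p ?k)"
              proof (rule ccontr)
                assume "\<not> K2 \<le> cJ \<phi>1 (prefix_code p ?k)"
                then have lt: "bmin (\<lambda>i. \<not> dn ?k i) ?k < K2" using J by simp
                then have "bmin (\<lambda>i. \<not> dn ?k i) ?k < ?k" by simp
                from bmin_P[OF this] have "\<not> dn ?k (bmin (\<lambda>i. \<not> dn ?k i) ?k)" .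
                moreover from B lt obtain k' where "k' \<le> B" "ansf \<phi>1 p (bmin (\<lambda>i. \<not> dn ?k i) ?k) k'" by blast
                ultimately show False unfolding dn_def by (meson le_imp_less_Suc max.coboundedI1)
              qed
              then show ?thesis using A aK2 le_imp_less_Suc by blast
            qed
          qed
        qed
      qed
    qed
  qed
qed


definition cntc :: "nat \<Rightarrow> nat \<Rightarrow> nat" where
  "cntc c j = rec_nat 0 (\<lambda>n r. r + (if 0 < nthc c n then 1 else 0)) j"

lemma PRF_cntc [intro]: assumes "PRF a" "PRF b" shows "PRF (\<lambda>xs. cntc (a xs) (b xs))"
proof -
  have P: "PR4 (\<lambda>y c b d. rec_nat 0 (\<lambda>n r. r + (if 0 < nthc c n then 1 else 0)) y)"
    by (rule PR_rec3; rule PR3I PR5I; intro PRF_add PRF_if PRP_less PRF_nthc PRF_arg PRF_const)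
  show ?thesis unfolding cntc_def by (rule PRF_PR4[OF P assms(2,1) PRF_zero PRF_zero])
qed

lemma cntc_pc: "j \<le> k \<Longrightarrow> cntc (prefix_code s k) j = card {i. i < j \<and> 0 < s i}"
proof (induction j)
  case 0 then show ?case by (simp add: cntc_def)
next
  case (Suc j)
  have eq: "{i. i < Suc j \<and> 0 < s i} = {i. i < j \<and> 0 < s i} \<union> (if 0 < s j then {j} else {})" by (auto simp: less_Suc_eq)
  have "cntc (prefix_code s k) (Suc j) = cntc (prefix_code s k) j + (if 0 < s j then 1 else 0)"
    using Suc.prems by (simp add: cntc_def)
  also have "\<dots> = card {i. i < Suc j \<and> 0 < s i}" using Suc by (simp add: eq)
  finally show ?case .
qed

lemma enum_char:
  fixes Z :: "nat set"
  assumes inf: "infinite Z"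
  shows "(j \<in> Z \<and> card {i. i < j \<and> i \<in> Z} = m) \<longleftrightarrow> j = enumerate Z m"
proof -
  have cardE: "card {i. i < enumerate Z l \<and> i \<in> Z} = l" for l
  proof -
    have "{i. i < enumerate Z l \<and> i \<in> Z} = enumerate Z ` {..<l}"
    proof
      show "{i. i < enumerate Z l \<and> i \<in> Z} \<subseteq> enumerate Z ` {..<l}"
      proof
        fix i assume "i \<in> {i. i < enumerate Z l \<and> i \<in> Z}"
        then have i: "i < enumerate Z l" "i \<in> Z" by auto
        obtain l' where "enumerate Z l' = i" using enumerate_Ex[OF inf i(2)] by blast
        then show "i \<in> enumerate Z ` {..<l}" using i(1) inf by auto
      qed
      show "enumerate Z ` {..<l} \<subseteq> {i. i < enumerate Z l \<and> i \<in> Z}"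
        using inf enumerate_in_set[OF inf] by auto
    qed
    moreover have "inj_on (enumerate Z) {..<l}" using inj_enumerate[OF inf] by (simp add: inj_on_def inj_def)
    ultimately show ?thesis by (simp add: card_image)
  qed
  show ?thesis
  proof
    assume a: "j \<in> Z \<and> card {i. i < j \<and> i \<in> Z} = m"
    obtain l where l: "enumerate Z l = j" using enumerate_Ex[OF inf] a by blast
    then have "l = m" using cardE[of l] a by simp
    then show "j = enumerate Z m" using l by simp
  next
    assume "j = enumerate Z m"
    then show "j \<in> Z \<and> card {i. i < j \<and> i \<in> Z} = m" using cardE enumerate_in_set[OF inf] by simp
  qed
qed

definition moF :: "baire \<Rightarrow> baire option" where
  "moF s = (if minus_one_infinite s then Some (minus_one s) else None)"

lemma comp_moF: "computable moF"
proof (rule computableI)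
  let ?J = "\<lambda>m c. bmin (\<lambda>j. 0 < nthc c j \<and> cntc c j = m) (lenc c)"
  let ?\<phi> = "\<lambda>m c. if ?J m c < lenc c then Suc (nthc c (?J m c) - 1) else 0"
  have "PRP4 (\<lambda>j m c d. 0 < nthc c j \<and> cntc c j = m)"
    by (rule PRP4I) (intro PRP_conj PRP_less PRP_eq PRF_nthc PRF_cntc PRF_arg PRF_const)
  from PRF_bmin[OF this PRF_lenc[OF PRF_arg] PRF_arg PRF_arg PRF_zero]
  have J: "PRF (\<lambda>xs. ?J (arg 0 xs) (arg 1 xs))" .
  show "PR2 ?\<phi>" by (rule PR2I) (intro PRF_if PRP_less J PRF_Suc PRF_sub PRF_nthc PRF_lenc PRF_arg PRF_const)
  show "computes ?\<phi> moF" unfolding computes_def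
  proof (intro allI impI)
    fix s q assume "moF s = Some q"
    then have inf: "infinite {n. 0 < s n}" and q: "q = minus_one s"
      by (auto simp: moF_def minus_one_infinite_def split: if_splits)
    let ?Z = "{n. 0 < s n}"
    have P: "(0 < s j \<and> card {i. i < j \<and> 0 < s i} = m) \<longleftrightarrow> j = enumerate ?Z m" for j m
      using enum_char[OF inf, of j m] by simp
    have Jk: "bmin (\<lambda>j. 0 < nthc (prefix_code s k) j \<and> cntc (prefix_code s k) j = m) k = bmin (\<lambda>j. j = enumerate ?Z m) k" for m k
      by (rule bmin_cong) (simp add: cntc_pc P[symmetric])
    have lt: "bmin (\<lambda>j. j = enumerate ?Z m) k < k \<longleftrightarrow> enumerate ?Z m < k" for m k
      by (simp add: bmin_ex)
    have A: "ansf ?\<phi> s m k \<longleftrightarrow> enumerate ?Z m < k" for m k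
      by (simp add: ansf_def Jk lt)
    show "(\<forall>n. \<exists>k. ansf ?\<phi> s n k) \<and> q = outf ?\<phi> s"
    proof (intro conjI allI ext)
      fix n show "\<exists>k. ansf ?\<phi> s n k" using A by blast
    next
      fix n show "q n = outf ?\<phi> s n"
      proof (rule sym, rule outf_consistent)
        show "\<exists>k. ansf ?\<phi> s n k" using A by blast
        fix k assume "ansf ?\<phi> s n k"
        then have ek: "enumerate ?Z n < k" using A by simp
        then have "bmin (\<lambda>j. j = enumerate ?Z n) k = enumerate ?Z n"
          using bmin_is_Least[of "\<lambda>j. j = enumerate ?Z n" k] lt Least_equality[of "\<lambda>j. j = enumerate ?Z n" "enumerate ?Z n"] by simp
        then show "?\<phi> n (prefix_code s k) = Suc (q n)"
          using ek by (simp add: Jk q minus_one_def)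
      qed
    qed
  qed
qed

definition code2 :: "nat \<Rightarrow> nat" where "code2 b = (if b \<le> 1 then Suc b else 0)"

definition Sv :: "(nat \<Rightarrow> nat \<Rightarrow> nat) \<Rightarrow> baire \<Rightarrow> baire" where
  "Sv \<phi> s = (\<lambda>m. if \<exists>k<Suc m. ansf \<phi> s 1 k then code2 (outf \<phi> s 1) else 0)"

lemma comp_Sv: assumes "PR2 \<phi>" shows "computable (\<lambda>s. Some (Sv \<phi> s))"
proof (rule computableI)
  let ?B = "\<lambda>m c. bmin (\<lambda>k. 0 < \<phi> 1 (takec c k)) (Suc m)"
  let ?\<psi> = "\<lambda>m c. if m < Suc (lenc c) then Suc (if ?B m c < Suc m then code2 (\<phi> 1 (takec c (?B m c)) - 1) else 0) else 0"
  have "PRP4 (\<lambda>k m c d. 0 < \<phi> 1 (takec c k))"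
    by (rule PRP4I) (intro PRP_less PRF_PR2[OF assms] PRF_takec PRF_arg PRF_const)
  from PRF_bmin[OF this PRF_Suc[OF PRF_arg] PRF_arg PRF_arg PRF_zero]
  have B: "PRF (\<lambda>xs. ?B (arg 0 xs) (arg 1 xs))" .
  show "PR2 ?\<psi>" unfolding code2_def
    by (rule PR2I) (intro PRF_if PRP_less PRP_le B PRF_Suc PRF_sub PRF_PR2[OF assms] PRF_takec PRF_lenc PRF_arg PRF_const)
  show "computes ?\<psi> (\<lambda>s. Some (Sv \<phi> s))" unfolding computes_def
  proof (intro allI impI)
    fix s q assume "Some (Sv \<phi> s) = Some q"
    then have q: "q = Sv \<phi> s" by simp
    have Bk: "?B m (prefix_code s k) = bmin (ansf \<phi> s 1) (Suc m)" if "m \<le> k" for m k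
      by (rule bmin_cong) (use that in \<open>simp add: ansf_def\<close>)
    have A: "ansf ?\<psi> s m k \<longleftrightarrow> m \<le> k" for m k by (simp add: ansf_def)
    show "(\<forall>n. \<exists>k. ansf ?\<psi> s n k) \<and> q = outf ?\<psi> s"
    proof (intro conjI allI ext)
      fix n show "\<exists>k. ansf ?\<psi> s n k" using A by blast
    next
      fix n show "q n = outf ?\<psi> s n"
      proof (rule sym, rule outf_consistent)
        show "\<exists>k. ansf ?\<psi> s n k" using A by blast
        fix k assume "ansf ?\<psi> s n k"
        then have nk: "n \<le> k" using A by simp
        show "?\<psi> n (prefix_code s k) = Suc (q n)"
        proof (cases "\<exists>k'<Suc n. ansf \<phi> s 1 k'")
          case True
          then have lt: "bmin (ansf \<phi> s 1) (Suc n) < Suc n" by (simp add: bmin_ex)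
          then have L: "bmin (ansf \<phi> s 1) (Suc n) = (LEAST k. ansf \<phi> s 1 k)" by (rule bmin_is_Least)
          have Lk: "bmin (ansf \<phi> s 1) (Suc n) \<le> k" using lt nk by simp
          have "?\<psi> n (prefix_code s k) = Suc (code2 (\<phi> 1 (takec (prefix_code s k) (bmin (ansf \<phi> s 1) (Suc n))) - 1))"
            unfolding Bk[OF nk] using lt nk by simp
          also have "\<dots> = Suc (code2 (\<phi> 1 (prefix_code s (LEAST k. ansf \<phi> s 1 k)) - 1))"
            unfolding takec_pc[OF Lk] L[symmetric] ..
          also have "\<dots> = Suc (q n)" using True unfolding q Sv_def outf_def by simp
          finally show ?thesis .
        next
          case False
          then have nl: "\<not> bmin (ansf \<phi> s 1) (Suc n) < Suc n" by (simp add: bmin_ex)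
          have "?\<psi> n (prefix_code s k) = Suc 0"
            unfolding Bk[OF nk] using nl nk by simp
          also have "\<dots> = Suc (q n)" using False unfolding q Sv_def by auto
          finally show ?thesis .
        qed
      qed
    qed
  qed
qed


lemma computable_cong: "computable F \<Longrightarrow> (\<And>p. F p = G p) \<Longrightarrow> computable G"
proof -
  assume "computable F" "\<And>p. F p = G p" then have "F = G" by auto
  with \<open>computable F\<close> show ?thesis by simp
qed

lemma PR1_id: "PR1 (\<lambda>x. x)" by (rule PR1I) (rule PRF_arg)
lemma PR1_Suc: "PR1 Suc" by (rule PR1I) (intro PRF_Suc PRF_arg)
lemma PR1_zero: "PR1 (\<lambda>x. 0)" by (rule PR1I) (rule PRF_const)
lemma PR1_dbl: "PR1 (\<lambda>n. 2 * n)" by (rule PR1I) (intro PRF_mult PRF_arg PRF_const)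
lemma PR1_dbl1: "PR1 (\<lambda>n. 2 * n + 1)" by (rule PR1I) (intro PRF_add PRF_mult PRF_arg PRF_const)

lemma comp_id: "computable (\<lambda>p. Some p)"
  using comp_pointwise[OF PR1_id PR1_id] by simp
lemma comp_zero: "computable (\<lambda>p. Some (\<lambda>n. 0))"
  using comp_pointwise[OF PR1_id PR1_zero] by simp
lemma comp_ev: "computable (\<lambda>p. Some (\<lambda>n. p (2 * n)))"
  using comp_pointwise[OF PR1_dbl PR1_id] by simp
lemma comp_od: "computable (\<lambda>p. Some (\<lambda>n. p (2 * n + 1)))"
  using comp_pointwise[OF PR1_dbl1 PR1_id] by simp
lemma comp_plus1: "computable (\<lambda>p. Some (\<lambda>n. Suc (p n)))"
  using comp_pointwise[OF PR1_id PR1_Suc] by simp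

lemma pairB_ev [simp]: "(\<lambda>n. pairB a b (2 * n)) = a" by (simp add: pairB_def)
lemma pairB_od [simp]: "(\<lambda>n. pairB a b (Suc (2 * n))) = b" by (simp add: pairB_def)

lemma obind_Some [simp]: "obind (Some x) f = f x" by (simp add: obind_def)
lemma obind_None [simp]: "obind None f = None" by (simp add: obind_def)
lemma obind_eq_Some: "obind a f = Some y \<longleftrightarrow> (\<exists>x. a = Some x \<and> f x = Some y)"
  by (cases a) auto

lemma prefix_code_agree: assumes "\<And>i. i < j \<Longrightarrow> s i = s' i" shows "prefix_code s j = prefix_code s' j"
proof -
  have "map s [0..<j] = map s' [0..<j]" by (rule map_cong[OF refl]) (use assms in auto)
  then show ?thesis unfolding prefix_code_def by (rule arg_cong[where f=list_encode])
qed

lemma enumerate_UNIV: "enumerate (UNIV :: nat set) m = m"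
  using enum_char[of "UNIV :: nat set" m m] by simp

lemma computes_out: "computes \<phi> F \<Longrightarrow> F p = Some q \<Longrightarrow> (\<forall>n. \<exists>k. ansf \<phi> p n k) \<and> q = outf \<phi> p"
  by (simp add: computes_def)

definition plus1 :: "baire \<Rightarrow> baire" where "plus1 r = (\<lambda>n. Suc (r n))"
definition zs :: baire where "zs = (\<lambda>n. 0)"

lemma compl_rep_plus1: "compl_rep \<delta> (plus1 r) = (case \<delta> r of Some x \<Rightarrow> Some (Some x) | None \<Rightarrow> Some None)"
proof -
  have "{n. 0 < plus1 r n} = UNIV" by (simp add: plus1_def)
  then have "minus_one_infinite (plus1 r)" "minus_one (plus1 r) = r"
    by (auto simp: minus_one_infinite_def minus_one_def enumerate_UNIV plus1_def)
  then show ?thesis by (simp add: compl_rep_def)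
qed

lemma compl_rep_zs: "compl_rep \<delta> zs = Some None"
  by (simp add: compl_rep_def minus_one_infinite_def zs_def)



lemma core:
  fixes f :: "'x \<Rightarrow> 'y set" and g :: "'u \<Rightarrow> 'v set"
    and \<delta>X :: "baire \<Rightarrow> 'x option" and \<delta>Y :: "baire \<Rightarrow> 'y option"
    and \<delta>U :: "baire \<Rightarrow> 'u option" and \<delta>V :: "baire \<Rightarrow> 'v option"
    and V :: "baire \<Rightarrow> baire \<Rightarrow> baire"
  assumes cH: "computes \<phi> H"
    and Vagree: "\<And>p q k. (\<And>m. m < k \<Longrightarrow> q m = 0) \<Longrightarrow> (\<And>i. i < k \<Longrightarrow> V (pairB p q) zs i = V (pairB p zs) zs i)"
    and hyp: "\<And>Gb. realizes Gb (compl_rep \<delta>U) (compl_rep \<delta>V) (completion g) \<Longrightarrow>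
        realizes (\<lambda>s. obind (K s) (\<lambda>q. obind (Gb q) (\<lambda>r. H (V s r)))) (prod_rep \<delta>X rep_neg_two) (prod_rep \<delta>Y rep_two) (prob_prod f C2)"
    and G: "realizes G \<delta>U \<delta>V g"
    and px: "\<delta>X p = Some x" "f x \<noteq> {}"
  shows "\<exists>k r w y. K (pairB p (Sv \<phi> (V (pairB p zs) zs))) = Some k \<and> minus_one_infinite k \<and> G (minus_one k) = Some r \<and>
           H (V (pairB p (Sv \<phi> (V (pairB p zs) zs))) (plus1 r)) = Some w \<and> \<delta>Y (\<lambda>n. w (2 * n)) = Some y \<and> y \<in> f x"
proof -
  define Q where "Q = Sv \<phi> (V (pairB p zs) zs)"
  define s1 where "s1 = V (pairB p zs) zs"
  define s0 where "s0 = pairB p Q"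
  define Gb where "Gb s = (case compl_rep \<delta>U s of Some (Some u) \<Rightarrow> if g u \<noteq> {} then map_option plus1 (G (minus_one s)) else Some zs | _ \<Rightarrow> Some zs)" for s
  have Gb_real: "realizes Gb (compl_rep \<delta>U) (compl_rep \<delta>V) (completion g)"
    unfolding realizes_def
  proof (intro allI impI)
    fix s ou assume a: "compl_rep \<delta>U s = Some ou \<and> completion g ou \<noteq> {}"
    show "\<exists>q v. Gb s = Some q \<and> compl_rep \<delta>V q = Some v \<and> v \<in> completion g ou"
    proof (cases "\<exists>u. ou = Some u \<and> g u \<noteq> {}")
      case True
      then obtain u where u: "ou = Some u" "g u \<noteq> {}" by blast
      then have "minus_one_infinite s" "\<delta>U (minus_one s) = Some u" using a
        by (auto simp: compl_rep_def split: if_splits option.splits)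
      then obtain r v where r: "G (minus_one s) = Some r" "\<delta>V r = Some v" "v \<in> g u"
        using G u unfolding realizes_def by blast
      show ?thesis
        by (rule exI[of _ "plus1 r"], rule exI[of _ "Some v"])
           (use a u r in \<open>simp add: Gb_def compl_rep_plus1 completion_def\<close>)
    next
      case False
      then have "Gb s = Some zs" using a by (auto simp: Gb_def split: option.splits)
      moreover have "None \<in> completion g ou" using False by (auto simp: completion_def split: option.splits)
      ultimately show ?thesis using compl_rep_zs by blast
    qed
  qed
  note R = hyp[OF Gb_real, unfolded realizes_def, rule_format]
  define c where "c = code2 (outf \<phi> s1 1)"
  have Qv: "Q m = 0 \<or> Q m = c" for m by (simp add: Q_def Sv_def c_def s1_def)
  have c2: "c \<le> 2" by (simp add: c_def code2_def)
  define A where "A = {b. \<forall>n. Q n \<noteq> (if b then 2 else 1)}"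
  have A_ne: "(c = 1) \<in> A"
  proof -
    have "Q n \<noteq> (if c = 1 then 2 else 1)" for n using Qv[of n] by (cases "c = 1") auto
    then show ?thesis unfolding A_def by simp
  qed
  have Qle: "\<forall>n. Q n \<le> 2"
  proof
    fix n show "Q n \<le> 2" using Qv[of n] c2 by auto
  qed
  have ps0: "prod_rep \<delta>X rep_neg_two s0 = Some (x, A)"
    using Qle by (simp add: prod_rep_def s0_def px rep_neg_two_def A_def)
  have "prob_prod f C2 (x, A) \<noteq> {}" using px(2) A_ne by (auto simp: prob_prod_def C2_def)
  then obtain q y' where qy: "obind (K s0) (\<lambda>q. obind (Gb q) (\<lambda>r. H (V s0 r))) = Some q"
      "prod_rep \<delta>Y rep_two q = Some y'" "y' \<in> prob_prod f C2 (x, A)"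
    using R[of s0 "(x, A)"] ps0 by blast
  obtain k r' where kr: "K s0 = Some k" "Gb k = Some r'" "H (V s0 r') = Some q"
    using qy(1) by (auto simp: obind_eq_Some)
  obtain y bb where ybb: "y' = (y, bb)" by (cases y')
  have yfx: "y \<in> f x" and bbA: "bb \<in> A" using qy(3) ybb by (auto simp: prob_prod_def C2_def)
  have dY: "\<delta>Y (\<lambda>n. q (2 * n)) = Some y" and rb: "rep_two (\<lambda>n. q (2 * n + 1)) = Some bb"
    using qy(2) ybb by (auto simp: prod_rep_def split: option.splits)
  show ?thesis
  proof (cases "\<exists>u. compl_rep \<delta>U k = Some (Some u) \<and> g u \<noteq> {}")
    case True
    then obtain u where u: "compl_rep \<delta>U k = Some (Some u)" "g u \<noteq> {}" by blast
    then have inf: "minus_one_infinite k" by (auto simp: compl_rep_def split: if_splits option.splits)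
    from u obtain r where r: "G (minus_one k) = Some r" "r' = plus1 r"
      using kr(2) by (auto simp: Gb_def)
    show ?thesis using kr r inf dY yfx unfolding s0_def Q_def by blast
  next
    case False
    then have r': "r' = zs" using kr(2) by (auto simp: Gb_def split: option.splits)
    from cH kr(3) r' have tot: "\<forall>n. \<exists>k. ansf \<phi> (V s0 zs) n k" and qo: "q = outf \<phi> (V s0 zs)"
      by (auto simp: computes_def)
    have q1: "q 1 \<le> 1" "bb = (q 1 = 1)" using rb by (auto simp: rep_two_def split: if_splits)
    show ?thesis
    proof (cases "\<exists>k. ansf \<phi> s1 1 k")
      case True
      define k1 where "k1 = (LEAST k. ansf \<phi> s1 1 k)"
      have ak1: "ansf \<phi> s1 1 k1" using True unfolding k1_def by (rule LeastI_ex)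
      have Q0: "Q m = 0" if "m < k1" for m
      proof -
        have "\<not> (\<exists>k<Suc m. ansf \<phi> s1 1 k)"
        proof
          assume "\<exists>k<Suc m. ansf \<phi> s1 1 k"
          then obtain k where k: "k < Suc m" "ansf \<phi> s1 1 k" by blast
          from k(2) have "k1 \<le> k" unfolding k1_def by (rule Least_le)
          with that k(1) show False by simp
        qed
        then show ?thesis by (auto simp add: Q_def Sv_def s1_def)
      qed
      have ag: "V s0 zs i = s1 i" if "i < k1" for i
        using Vagree[where p=p and q=Q and k=k1, OF Q0 that] unfolding s0_def s1_def .
      have pc: "prefix_code (V s0 zs) j = prefix_code s1 j" if "j \<le> k1" for j
        by (rule prefix_code_agree) (use ag that in auto)
      have an: "ansf \<phi> (V s0 zs) 1 j \<longleftrightarrow> ansf \<phi> s1 1 j" if "j \<le> k1" for j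
        using pc[OF that] by (simp add: ansf_def)
      have L: "(LEAST j. ansf \<phi> (V s0 zs) 1 j) = k1"
      proof (rule Least_equality)
        show "ansf \<phi> (V s0 zs) 1 k1" using an ak1 by simp
        fix j assume aj: "ansf \<phi> (V s0 zs) 1 j"
        show "k1 \<le> j"
        proof (rule ccontr)
          assume "\<not> k1 \<le> j"
          then have "j \<le> k1" by simp
          with an aj have "ansf \<phi> s1 1 j" by simp
          then have "k1 \<le> j" unfolding k1_def by (rule Least_le)
          with \<open>\<not> k1 \<le> j\<close> show False by simp
        qed
      qed
      have "q 1 = \<phi> 1 (prefix_code (V s0 zs) (LEAST j. ansf \<phi> (V s0 zs) 1 j)) - 1" unfolding qo outf_def ..
      also have "\<dots> = \<phi> 1 (prefix_code s1 k1) - 1" unfolding L using pc[of k1] by simp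
      also have "\<dots> = outf \<phi> s1 1" unfolding outf_def k1_def ..
      finally have "q 1 = outf \<phi> s1 1" .
      then have cq: "c = Suc (q 1)" using q1 by (simp add: c_def code2_def)
      have "Q k1 = c" using True ak1 by (auto simp: Q_def Sv_def c_def s1_def)
      then have "Q k1 = (if bb then 2 else 1)" using cq q1 by auto
      then show ?thesis using bbA unfolding A_def by blast
    next
      case False
      then have "Q = zs" by (auto simp: Q_def Sv_def zs_def s1_def)
      then have "V s0 zs = s1" by (simp add: s0_def s1_def)
      then show ?thesis using tot False by auto
    qed
  qed
qed

lemma Vagree_pair:
  assumes "\<And>m. m < k \<Longrightarrow> q m = 0" "i < k"
  shows "pairB (pairB p q) zs i = pairB (pairB p zs) zs i"
proof -
  have "i div 2 div 2 < k" using assms(2) by linarith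
  then show ?thesis using assms(1) by (simp add: pairB_def zs_def)
qed

theorem proposition10p3:
  fixes f :: "'x \<Rightarrow> 'y set" and g :: "'u \<Rightarrow> 'v set"
    and \<delta>X :: "baire \<Rightarrow> 'x option" and \<delta>Y :: "baire \<Rightarrow> 'y option"
    and \<delta>U :: "baire \<Rightarrow> 'u option" and \<delta>V :: "baire \<Rightarrow> 'v option"
  assumes "representation \<delta>X" and "representation \<delta>Y"
    and "representation \<delta>U" and "representation \<delta>V"
  shows "(weihrauch_le (prod_rep \<delta>X rep_neg_two) (prod_rep \<delta>Y rep_two) (prob_prod f C2)
            (compl_rep \<delta>U) (compl_rep \<delta>V) (completion g)
          \<longrightarrow> weihrauch_le \<delta>X \<delta>Y f \<delta>U \<delta>V g)
       \<and> (strong_weihrauch_le (prod_rep \<delta>X rep_neg_two) (prod_rep \<delta>Y rep_two) (prob_prod f C2)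
            (compl_rep \<delta>U) (compl_rep \<delta>V) (completion g)
          \<longrightarrow> strong_weihrauch_le \<delta>X \<delta>Y f \<delta>U \<delta>V g)"
proof (intro conjI impI)
  assume "weihrauch_le (prod_rep \<delta>X rep_neg_two) (prod_rep \<delta>Y rep_two) (prob_prod f C2)
            (compl_rep \<delta>U) (compl_rep \<delta>V) (completion g)"
  then obtain H K where cH: "computable H" and cK: "computable K" and
    hyp: "\<And>Gb. realizes Gb (compl_rep \<delta>U) (compl_rep \<delta>V) (completion g) \<Longrightarrow>
        realizes (\<lambda>s. obind (K s) (\<lambda>q. obind (Gb q) (\<lambda>r. H (pairB s r)))) (prod_rep \<delta>X rep_neg_two) (prod_rep \<delta>Y rep_two) (prob_prod f C2)"
    unfolding weihrauch_le_def by blast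
  obtain \<phi> where p\<phi>: "PR2 \<phi>" "computes \<phi> H" using cH by (rule computableE)
  define Q where "Q p = Sv \<phi> (pairB (pairB p zs) zs)" for p
  have cQ: "computable (\<lambda>p. Some (Q p))"
    by (rule computable_cong[OF comp_comp[OF comp_pair[OF comp_pair[OF comp_id comp_zero] comp_zero] comp_Sv[OF p\<phi>(1)]]])
       (simp add: Q_def opair_def zs_def)
  define K' where "K' p = obind (K (pairB p (Q p))) moF" for p
  have cK': "computable K'"
    by (rule computable_cong[OF comp_comp[OF comp_comp[OF comp_pair[OF comp_id cQ] cK] comp_moF]])
       (simp add: K'_def opair_def)
  define H' where "H' t = obind (H (pairB (pairB (\<lambda>n. t (2 * n)) (Q (\<lambda>n. t (2 * n)))) (plus1 (\<lambda>n. t (2 * n + 1)))))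
      (\<lambda>w. Some (\<lambda>n. w (2 * n)))" for t
  have cH': "computable H'"
    by (rule computable_cong[OF comp_comp[OF comp_comp[OF comp_pair[OF comp_pair[OF comp_ev comp_comp[OF comp_ev cQ]]
          comp_comp[OF comp_od comp_plus1]] cH] comp_ev]])
       (simp add: H'_def opair_def plus1_def)
  show "weihrauch_le \<delta>X \<delta>Y f \<delta>U \<delta>V g"
    unfolding weihrauch_le_def
  proof (intro exI conjI allI impI)
    show "computable H'" "computable K'" by (fact cH', fact cK')
    fix G assume G: "realizes G \<delta>U \<delta>V g"
    show "realizes (\<lambda>p. obind (K' p) (\<lambda>q. obind (G q) (\<lambda>r. H' (pairB p r)))) \<delta>X \<delta>Y f"
      unfolding realizes_def
    proof (intro allI impI)
      fix p x assume px: "\<delta>X p = Some x \<and> f x \<noteq> {}"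
      have "\<exists>k r w y. K (pairB p (Sv \<phi> (pairB (pairB p zs) zs))) = Some k \<and> minus_one_infinite k \<and> G (minus_one k) = Some r \<and>
           H (pairB (pairB p (Sv \<phi> (pairB (pairB p zs) zs))) (plus1 r)) = Some w \<and> \<delta>Y (\<lambda>n. w (2 * n)) = Some y \<and> y \<in> f x"
        apply (rule core[where V=pairB and H=H and K=K and \<phi>=\<phi> and G=G and f=f and x=x and g=g and \<delta>U=\<delta>U and \<delta>V=\<delta>V and \<delta>X=\<delta>X and \<delta>Y=\<delta>Y and p=p])
             apply (rule p\<phi>(2))
            apply (rule Vagree_pair; assumption)
           apply (rule hyp; assumption)
          apply (rule G)
         apply (rule px[THEN conjunct1])
        apply (rule px[THEN conjunct2])
        done
      then
      obtain k r w y where kr: "K (pairB p (Q p)) = Some k" "minus_one_infinite k" "G (minus_one k) = Some r"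
           "H (pairB (pairB p (Q p)) (plus1 r)) = Some w" "\<delta>Y (\<lambda>n. w (2 * n)) = Some y" "y \<in> f x"
        unfolding Q_def by blast
      have "obind (K' p) (\<lambda>q. obind (G q) (\<lambda>r. H' (pairB p r))) = Some (\<lambda>n. w (2 * n))"
        using kr by (simp add: K'_def moF_def H'_def)
      then show "\<exists>q y. obind (K' p) (\<lambda>q. obind (G q) (\<lambda>r. H' (pairB p r))) = Some q \<and> \<delta>Y q = Some y \<and> y \<in> f x"
        using kr by blast
    qed
  qed
next
  assume "strong_weihrauch_le (prod_rep \<delta>X rep_neg_two) (prod_rep \<delta>Y rep_two) (prob_prod f C2)
            (compl_rep \<delta>U) (compl_rep \<delta>V) (completion g)"
  then obtain H K where cH: "computable H" and cK: "computable K" and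
    hyp: "\<And>Gb. realizes Gb (compl_rep \<delta>U) (compl_rep \<delta>V) (completion g) \<Longrightarrow>
        realizes (\<lambda>s. obind (K s) (\<lambda>q. obind (Gb q) (\<lambda>r. H ((\<lambda>s r. r) s r)))) (prod_rep \<delta>X rep_neg_two) (prod_rep \<delta>Y rep_two) (prob_prod f C2)"
    unfolding strong_weihrauch_le_def by (metis (no_types))
  obtain \<phi> where p\<phi>: "PR2 \<phi>" "computes \<phi> H" using cH by (rule computableE)
  define Q where "Q = Sv \<phi> zs"
  have cQ: "computable (\<lambda>p. Some Q)"
    by (rule computable_cong[OF comp_comp[OF comp_zero comp_Sv[OF p\<phi>(1)]]])
       (simp add: Q_def zs_def)
  define K' where "K' p = obind (K (pairB p Q)) moF" for p
  have cK': "computable K'"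
    by (rule computable_cong[OF comp_comp[OF comp_comp[OF comp_pair[OF comp_id cQ] cK] comp_moF]])
       (simp add: K'_def opair_def)
  define H' where "H' t = obind (H (plus1 t)) (\<lambda>w. Some (\<lambda>n. w (2 * n)))" for t
  have cH': "computable H'"
    by (rule computable_cong[OF comp_comp[OF comp_comp[OF comp_plus1 cH] comp_ev]])
       (simp add: H'_def plus1_def)
  show "strong_weihrauch_le \<delta>X \<delta>Y f \<delta>U \<delta>V g"
    unfolding strong_weihrauch_le_def
  proof (intro exI conjI allI impI)
    show "computable H'" "computable K'" by (fact cH', fact cK')
    fix G assume G: "realizes G \<delta>U \<delta>V g"
    show "realizes (\<lambda>p. obind (K' p) (\<lambda>q. obind (G q) H')) \<delta>X \<delta>Y f"
      unfolding realizes_def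
    proof (intro allI impI)
      fix p x assume px: "\<delta>X p = Some x \<and> f x \<noteq> {}"
      have "\<exists>k r w y. K (pairB p (Sv \<phi> ((\<lambda>s r. r) (pairB p zs) zs))) = Some k \<and> minus_one_infinite k \<and> G (minus_one k) = Some r \<and>
           H ((\<lambda>s r. r) (pairB p (Sv \<phi> ((\<lambda>s r. r) (pairB p zs) zs))) (plus1 r)) = Some w \<and> \<delta>Y (\<lambda>n. w (2 * n)) = Some y \<and> y \<in> f x"
        apply (rule core[where V="\<lambda>s r. r" and H=H and K=K and \<phi>=\<phi> and G=G and f=f and x=x and g=g and \<delta>U=\<delta>U and \<delta>V=\<delta>V and \<delta>X=\<delta>X and \<delta>Y=\<delta>Y and p=p])
             apply (rule p\<phi>(2))
            apply simp
           apply (rule hyp; assumption)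
          apply (rule G)
         apply (rule px[THEN conjunct1])
        apply (rule px[THEN conjunct2])
        done
      then
      obtain k r w y where kr: "K (pairB p Q) = Some k" "minus_one_infinite k" "G (minus_one k) = Some r"
           "H (plus1 r) = Some w" "\<delta>Y (\<lambda>n. w (2 * n)) = Some y" "y \<in> f x"
        unfolding Q_def by blast
      have "obind (K' p) (\<lambda>q. obind (G q) H') = Some (\<lambda>n. w (2 * n))"
        using kr by (simp add: K'_def moF_def H'_def)
      then show "\<exists>q y. obind (K' p) (\<lambda>q. obind (G q) H') = Some q \<and> \<delta>Y q = Some y \<and> y \<in> f x"
        using kr by blast
    qed
  qed
qed

end
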